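(* Let $E=\ell^\infty(\mathbb N^2)$ (complex), let $\mathcal X$ be its closed unit ball with the weak-* topology, with elements written $x=(x_{j,k})_{j,k=1}^\infty$, and let $\mathcal A$ be the uniform algebra on $\mathcal X$ generated by the coordinate projections $p_{j,k}(x)=x_{j,k}$. Then there is a unital endomorphism of $\mathcal A$ which is a Riesz operator but is not power compact. Specifically, the map $\phi:\mathcal X\to\mathcal X$, $(\phi(x))_{j,k}=x_{j,k+1}/(k+1)$, induces such an endomorphism $Tf=f\circ\phi$.
   Context: $\mathcal X$ with the weak-* topology is compact metrizable; the uniform algebra generated by the $p_{j,k}$ is the closure in $C(\mathcal X)$ (supremum norm) of the polynomials in $1$ and the $p_{j,k}$. A bounded operator $T$ is a Riesz operator if $\lim_{n}\left[\inf\{\|T^n-K\|:K \text{ compact}\}\right]^{1/n}=0$; it is power compact if $T^N$ is compact for some positive integer $N$. *)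

theory Defs
  imports "HOL-Analysis.Analysis"
begin

type_synonym pt = "nat \<times> nat \<Rightarrow> complex"
type_synonym fn = "pt \<Rightarrow> complex"

text \<open>Closed unit ball of ell-infinity(N^2) (indices shifted to start at 0).\<close>
definition Xball :: "pt set" where
  "Xball = {x. \<forall>i. norm (x i) \<le> 1}"

inductive_set polys :: "fn set" where
  poly_const: "(\<lambda>x. c) \<in> polys"
| poly_proj: "(\<lambda>x. x i) \<in> polys"
| poly_add: "p \<in> polys \<Longrightarrow> q \<in> polys \<Longrightarrow> (\<lambda>x. p x + q x) \<in> polys"
| poly_mult: "p \<in> polys \<Longrightarrow> q \<in> polys \<Longrightarrow> (\<lambda>x. p x * q x) \<in> polys"

definition supnorm :: "fn \<Rightarrow> real" where
  "supnorm f = (SUP x\<in>Xball. norm (f x))"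

text \<open>The uniform algebra: sup-norm closure on X of the polynomials; functions
  are normalised to be 0 off X.\<close>
definition Aalg :: "fn set" where
  "Aalg = {f. (\<forall>x. x \<notin> Xball \<longrightarrow> f x = 0) \<and>
              (\<forall>e>0. \<exists>p\<in>polys. \<forall>x\<in>Xball. norm (f x - p x) \<le> e)}"

definition oneA :: fn where
  "oneA = (\<lambda>x. if x \<in> Xball then 1 else 0)"

definition linear_on_A :: "(fn \<Rightarrow> fn) \<Rightarrow> bool" where
  "linear_on_A T \<longleftrightarrow> (\<forall>f\<in>Aalg. T f \<in> Aalg) \<and>
     (\<forall>f\<in>Aalg. \<forall>g\<in>Aalg. T (\<lambda>x. f x + g x) = (\<lambda>x. T f x + T g x)) \<and>
     (\<forall>c. \<forall>f\<in>Aalg. T (\<lambda>x. c * f x) = (\<lambda>x. c * T f x))"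

definition unital_endomorphism :: "(fn \<Rightarrow> fn) \<Rightarrow> bool" where
  "unital_endomorphism T \<longleftrightarrow> linear_on_A T \<and>
     (\<forall>f\<in>Aalg. \<forall>g\<in>Aalg. T (\<lambda>x. f x * g x) = (\<lambda>x. T f x * T g x)) \<and>
     T oneA = oneA"

definition bounded_on_A :: "(fn \<Rightarrow> fn) \<Rightarrow> bool" where
  "bounded_on_A T \<longleftrightarrow> (\<exists>C. \<forall>f\<in>Aalg. supnorm (T f) \<le> C * supnorm f)"

definition opnorm :: "(fn \<Rightarrow> fn) \<Rightarrow> real" where
  "opnorm T = (SUP f\<in>{f\<in>Aalg. supnorm f \<le> 1}. supnorm (T f))"

definition compact_op :: "(fn \<Rightarrow> fn) \<Rightarrow> bool" where
  "compact_op K \<longleftrightarrow> linear_on_A K \<and>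
     (\<forall>f::nat \<Rightarrow> fn. (\<forall>n. f n \<in> Aalg \<and> supnorm (f n) \<le> 1) \<longrightarrow>
        (\<exists>r g. strict_mono r \<and> g \<in> Aalg \<and>
           (\<lambda>n. supnorm (\<lambda>x. K (f (r n)) x - g x)) \<longlonglongrightarrow> 0))"

definition ess_norm :: "(fn \<Rightarrow> fn) \<Rightarrow> real" where
  "ess_norm S = Inf {opnorm (\<lambda>f x. S f x - K f x) | K. compact_op K}"

definition riesz_op :: "(fn \<Rightarrow> fn) \<Rightarrow> bool" where
  "riesz_op T \<longleftrightarrow> (\<lambda>n. root n (ess_norm (T ^^ n))) \<longlonglongrightarrow> 0"

definition power_compact :: "(fn \<Rightarrow> fn) \<Rightarrow> bool" where
  "power_compact T \<longleftrightarrow> (\<exists>N>0. compact_op (T ^^ N))"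

text \<open>phi with 0-based indices: (phi x)(j,k) = x(j,k+1)/(k+2)
  (corresponds to x_{j,k+1}/(k+1) with 1-based indices).\<close>
definition phi :: "pt \<Rightarrow> pt" where
  "phi x = (\<lambda>(j,k). x (j, k+1) / of_nat (k+2))"

definition Tphi :: "fn \<Rightarrow> fn" where
  "Tphi f = (\<lambda>x. if x \<in> Xball then f (phi x) else 0)"

end

theory Submission
  imports Defs "HOL-Complex_Analysis.Complex_Analysis"
begin


definition bnd :: "fn \<Rightarrow> bool" where
  "bnd f \<longleftrightarrow> bdd_above ((\<lambda>x. norm (f x)) ` Xball)"

lemma zero_Xball[simp]: "(\<lambda>_. 0) \<in> Xball"
  by (simp add: Xball_def)

lemma Xball_ne[simp]: "Xball \<noteq> {}"
  using zero_Xball by blast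

lemma supnorm_ge: "bnd f \<Longrightarrow> x \<in> Xball \<Longrightarrow> norm (f x) \<le> supnorm f"
  unfolding supnorm_def bnd_def by (rule cSUP_upper)

lemma supnorm_le: "(\<And>x. x \<in> Xball \<Longrightarrow> norm (f x) \<le> c) \<Longrightarrow> supnorm f \<le> c"
  unfolding supnorm_def by (rule cSUP_least) auto

lemma bndI: "(\<And>x. x \<in> Xball \<Longrightarrow> norm (f x) \<le> c) \<Longrightarrow> bnd f"
  unfolding bnd_def by (rule bdd_aboveI2) auto

lemma supnorm_nonneg: "bnd f \<Longrightarrow> 0 \<le> supnorm f"
  using supnorm_ge[of f "\<lambda>_. 0"] zero_Xball norm_ge_zero order_trans by blast

lemma bnd_supnorm: "bnd f \<Longrightarrow> x \<in> Xball \<Longrightarrow> norm (f x) \<le> supnorm f"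
  by (rule supnorm_ge)

lemma bnd_diff: assumes "bnd f" "bnd g" shows "bnd (\<lambda>x. f x - g x)"
proof (rule bndI[of _ "supnorm f + supnorm g"])
  fix x assume "x \<in> Xball"
  then have "norm (f x) \<le> supnorm f" "norm (g x) \<le> supnorm g" using assms by (auto intro: supnorm_ge)
  then show "norm (f x - g x) \<le> supnorm f + supnorm g"
    using norm_triangle_ineq4[of "f x" "g x"] by linarith
qed

lemma supnorm_diff: assumes "bnd f" "bnd g" shows "supnorm (\<lambda>x. f x - g x) \<le> supnorm f + supnorm g"
proof (rule supnorm_le)
  fix x assume "x \<in> Xball"
  then have "norm (f x) \<le> supnorm f" "norm (g x) \<le> supnorm g" using assms by (auto intro: supnorm_ge)
  then show "norm (f x - g x) \<le> supnorm f + supnorm g"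
    using norm_triangle_ineq4[of "f x" "g x"] by linarith
qed

lemma supnorm_const: "(\<And>x. x \<in> Xball \<Longrightarrow> f x = c) \<Longrightarrow> supnorm f = norm c"
  unfolding supnorm_def by (simp add: cSUP_const)

lemma polys_bnd: "p \<in> polys \<Longrightarrow> \<exists>C. \<forall>x\<in>Xball. norm (p x) \<le> C"
proof (induction rule: polys.induct)
  case (poly_const c) then show ?case by auto
next
  case (poly_proj i) then show ?case unfolding Xball_def by (intro exI[of _ 1]) blast
next
  case (poly_add p q)
  then obtain C D where "\<forall>x\<in>Xball. norm (p x) \<le> C" "\<forall>x\<in>Xball. norm (q x) \<le> D" by blast
  then show ?case by (intro exI[of _ "C + D"]) (smt (verit) norm_triangle_ineq)
next
  case (poly_mult p q)
  then obtain C D where "\<forall>x\<in>Xball. norm (p x) \<le> C" "\<forall>x\<in>Xball. norm (q x) \<le> D" by blast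
  then show ?case by (intro exI[of _ "C * D"]) (simp add: norm_mult mult_mono')
qed

lemma polys_bnd': "p \<in> polys \<Longrightarrow> bnd p"
  using polys_bnd bndI by metis

lemma Aalg_bnd: "f \<in> Aalg \<Longrightarrow> bnd f"
proof -
  assume "f \<in> Aalg"
  then have "\<forall>e>0. \<exists>p\<in>polys. \<forall>x\<in>Xball. norm (f x - p x) \<le> e" unfolding Aalg_def by blast
  then obtain p where p: "p \<in> polys" "\<forall>x\<in>Xball. norm (f x - p x) \<le> 1"
    using zero_less_one by blast
  then obtain C where "\<forall>x\<in>Xball. norm (p x) \<le> C" using polys_bnd by blast
  with p show ?thesis
    by (intro bndI[of _ "C + 1"]) (smt (verit) norm_triangle_ineq2)
qed

lemma Aalg_out: "f \<in> Aalg \<Longrightarrow> x \<notin> Xball \<Longrightarrow> f x = 0"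
  unfolding Aalg_def by auto

lemma phi_Xball: "x \<in> Xball \<Longrightarrow> phi x \<in> Xball"
proof -
  assume x: "x \<in> Xball"
  { fix j k
    have "norm (x (j, k+1)) \<le> 1" using x by (auto simp: Xball_def)
    moreover have "norm (of_nat (k+2) :: complex) = real (k+2)" by (rule norm_of_nat)
    ultimately have "norm (x (j, k+1) / of_nat (k+2)) \<le> 1"
      by (simp add: norm_divide divide_le_eq_1 del: of_nat_add)
  }
  then show ?thesis by (auto simp: Xball_def phi_def)
qed

lemma polys_phi: "p \<in> polys \<Longrightarrow> (\<lambda>x. p (phi x)) \<in> polys"
proof (induction rule: polys.induct)
  case (poly_const c) then show ?case by (rule polys.poly_const)
next
  case (poly_proj i)
  obtain j k where i: "i = (j, k)" by force
  have "(\<lambda>x. (\<lambda>x. inverse (of_nat (k+2))) x * (\<lambda>x. x (j, k+1)) x) \<in> polys"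
    by (intro polys.intros)
  moreover have "(\<lambda>x. phi x i) = (\<lambda>x. (\<lambda>x. inverse (of_nat (k+2))) x * (\<lambda>x. x (j, k+1)) x)"
    by (auto simp: phi_def i field_simps)
  ultimately show ?case by simp
next
  case (poly_add p q) then show ?case using polys.poly_add by blast
next
  case (poly_mult p q) then show ?case using polys.poly_mult by blast
qed

lemma Tphi_Aalg: "f \<in> Aalg \<Longrightarrow> Tphi f \<in> Aalg"
proof -
  assume f: "f \<in> Aalg"
  show ?thesis unfolding Aalg_def
  proof (intro CollectI conjI allI impI)
    fix x assume "x \<notin> Xball" then show "Tphi f x = 0" by (simp add: Tphi_def)
  next
    fix e :: real assume "e > 0"
    then obtain p where p: "p \<in> polys" "\<forall>x\<in>Xball. norm (f x - p x) \<le> e"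
      using f unfolding Aalg_def by blast
    show "\<exists>p\<in>polys. \<forall>x\<in>Xball. norm (Tphi f x - p x) \<le> e"
      by (intro bexI[of _ "\<lambda>x. p (phi x)"]) (use p phi_Xball polys_phi in \<open>auto simp: Tphi_def\<close>)
  qed
qed

lemma unital: "unital_endomorphism Tphi"
  unfolding unital_endomorphism_def linear_on_A_def
  using Tphi_Aalg by (auto simp: Tphi_def oneA_def phi_Xball fun_eq_iff)

lemma Tphi_pow: "f \<in> Aalg \<Longrightarrow> (Tphi ^^ n) f x = (if x \<in> Xball then f ((phi ^^ n) x) else 0)"
proof (induction n arbitrary: x)
  case 0 then show ?case by (auto simp: Aalg_out)
next
  case (Suc n)
  have "(Tphi ^^ Suc n) f x = Tphi ((Tphi ^^ n) f) x" by simp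
  also have "\<dots> = (if x \<in> Xball then (Tphi ^^ n) f (phi x) else 0)"
    by (rule Tphi_def[of "(Tphi^^n) f", THEN fun_cong])
  also have "\<dots> = (if x \<in> Xball then f ((phi ^^ Suc n) x) else 0)"
    using Suc phi_Xball by (simp add: funpow_Suc_right del: funpow.simps)
  finally show ?case .
qed

lemma phi_pow_Xball: "x \<in> Xball \<Longrightarrow> (phi ^^ n) x \<in> Xball"
  by (induction n) (auto simp: phi_Xball)

lemma Tphi_pow_Aalg: "f \<in> Aalg \<Longrightarrow> (Tphi ^^ n) f \<in> Aalg"
  by (induction n) (auto simp: Tphi_Aalg)

lemma Tphi_pow_norm: "f \<in> Aalg \<Longrightarrow> supnorm ((Tphi ^^ n) f) \<le> supnorm f"
  by (rule supnorm_le) (auto simp: Tphi_pow phi_pow_Xball Aalg_bnd supnorm_ge)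

lemma bounded: "bounded_on_A Tphi"
  unfolding bounded_on_A_def
  using Tphi_pow_norm[of _ 1] by (intro exI[of _ 1]) simp



lemma poly_hol: "p \<in> polys \<Longrightarrow> (\<lambda>z. p (\<lambda>i. z * y i)) holomorphic_on UNIV"
proof (induction rule: polys.induct)
  case (poly_const c) then show ?case by simp
next
  case (poly_proj i) then show ?case by (intro holomorphic_intros)
next
  case (poly_add p q) then show ?case by (simp add: holomorphic_on_add)
next
  case (poly_mult p q) then show ?case by (simp add: holomorphic_on_mult)
qed

lemma poly_schwarz:
  assumes p: "p \<in> polys" and y: "y \<in> Xball" and r: "0 < r" "r < 1" and e: "e > 0"
  shows "norm (p (\<lambda>i. of_real r * y i) - p (\<lambda>_. 0)) \<le> r * (2 * supnorm p + e)"
proof -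
  define M where "M = supnorm p"
  have bp: "bnd p" using p polys_bnd' by blast
  have M0: "0 \<le> M" unfolding M_def using bp supnorm_nonneg by blast
  define g where "g = (\<lambda>z. p (\<lambda>i. z * y i))"
  have g0: "g 0 = p (\<lambda>_. 0)" by (simp add: g_def)
  have gM: "norm (g z) \<le> M" if "norm z < 1" for z
  proof -
    have "(\<lambda>i. z * y i) \<in> Xball"
      using y that unfolding Xball_def
      by (auto simp: norm_mult intro!: mult_le_one)
    then show ?thesis unfolding g_def M_def using bp supnorm_ge by blast
  qed
  have gM0: "norm (g 0) \<le> M" using gM by simp
  define h where "h = (\<lambda>z. (g z - g 0) / of_real (2 * M + e))"
  have D: "2 * M + e > 0" using M0 e by linarith
  have holh: "h holomorphic_on ball 0 1"
  proof -
    have "g holomorphic_on ball 0 1" unfolding g_def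
      using poly_hol[OF p, of y] holomorphic_on_subset subset_UNIV by blast
    then show ?thesis unfolding h_def by (intro holomorphic_intros) auto
  qed
  have h0: "h 0 = 0" by (simp add: h_def)
  have hlt: "norm (h z) < 1" if "norm z < 1" for z
  proof -
    have "norm (g z - g 0) \<le> 2 * M"
      using gM[OF that] gM0 norm_triangle_ineq4[of "g z" "g 0"] by linarith
    also have "\<dots> < 2 * M + e" using e by simp
    finally have "norm (g z - g 0) < 2 * M + e" .
    moreover have nD: "norm (complex_of_real (2*M+e)) = 2*M+e" using D by (simp only: norm_of_real abs_of_pos)
    ultimately show ?thesis using D unfolding h_def norm_divide nD by (simp add: divide_less_eq)
  qed
  have "norm (h (of_real r)) \<le> norm (of_real r :: complex)"
    by (rule Schwarz_Lemma(1)[OF holh h0 hlt]) (use r in auto)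
  moreover have nD: "norm (complex_of_real (2*M+e)) = 2*M+e" using D by (simp only: norm_of_real abs_of_pos)
  ultimately have "norm (g (of_real r) - g 0) / (2 * M + e) \<le> r"
    using r D unfolding h_def norm_divide nD by simp
  then have "norm (g (of_real r) - g 0) \<le> r * (2 * M + e)"
    using D by (simp add: divide_le_eq mult.commute)
  then show ?thesis unfolding g_def M_def by simp
qed

lemma Aalg_schwarz:
  assumes f: "f \<in> Aalg" and x: "\<And>i. norm (x i) \<le> r" and r: "0 < r" "r < 1"
  shows "norm (f x - f (\<lambda>_. 0)) \<le> 2 * r * supnorm f"
proof (rule field_le_epsilon)
  fix d :: real assume d: "d > 0"
  define e where "e = d / 5"
  have e: "e > 0" using d by (simp add: e_def)
  obtain p where p: "p \<in> polys" "\<forall>x\<in>Xball. norm (f x - p x) \<le> e"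
    using f e unfolding Aalg_def by blast
  have bf: "bnd f" using f Aalg_bnd by blast
  define y where "y = (\<lambda>i. x i / of_real r)"
  have y: "y \<in> Xball" using x r unfolding Xball_def y_def by (simp add: norm_divide)
  have xy: "x = (\<lambda>i. of_real r * y i)" using r by (simp add: y_def)
  have xX: "x \<in> Xball" unfolding Xball_def mem_Collect_eq using x r(2) by (meson less_imp_le order_trans)
  have sp: "supnorm p \<le> supnorm f + e"
  proof (rule supnorm_le)
    fix z assume z: "z \<in> Xball"
    have "norm (p z) \<le> norm (f z) + norm (f z - p z)" using norm_triangle_ineq4[of "f z" "f z - p z"] by simp
    also have "\<dots> \<le> supnorm f + e" using z p bf supnorm_ge add_mono by blast
    finally show "norm (p z) \<le> supnorm f + e" .
  qed
  have ps: "norm (p x - p (\<lambda>_. 0)) \<le> r * (2 * supnorm p + e)"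
    using poly_schwarz[OF p(1) y r e] xy by simp
  have "norm (f x - f (\<lambda>_. 0)) = norm ((f x - p x) + (p x - p (\<lambda>_. 0)) + (p (\<lambda>_. 0) - f (\<lambda>_. 0)))"
    by simp
  also have "\<dots> \<le> norm ((f x - p x) + (p x - p (\<lambda>_. 0))) + norm (p (\<lambda>_. 0) - f (\<lambda>_. 0))"
    by (rule norm_triangle_ineq)
  also have "\<dots> \<le> norm (f x - p x) + norm (p x - p (\<lambda>_. 0)) + norm (p (\<lambda>_. 0) - f (\<lambda>_. 0))"
    by (rule add_right_mono[OF norm_triangle_ineq])
  also have "\<dots> \<le> e + r * (2 * supnorm p + e) + e"
    using p xX ps by (intro add_mono) (auto simp: norm_minus_commute)
  also have "\<dots> \<le> e + r * (2 * (supnorm f + e) + e) + e"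
    using sp r by (intro add_mono mult_left_mono) auto
  also have "\<dots> = 2 * r * supnorm f + (2 * e + 3 * r * e)" by (simp add: algebra_simps)
  also have "\<dots> \<le> 2 * r * supnorm f + d"
    using r e unfolding e_def by (simp add: field_simps)
  finally show "norm (f x - f (\<lambda>_. 0)) \<le> 2 * r * supnorm f + d" .
qed



definition Pr :: "nat \<Rightarrow> nat \<Rightarrow> nat" where
  "Pr n k = (\<Prod>i<n. k + 2 + i)"

lemma Pr_Suc: "Pr (Suc n) k = (k + n + 2) * Pr n k"
  by (simp add: Pr_def)

lemma Pr_pos: "Pr n k > 0"
  by (simp add: Pr_def)

lemma Pr_fact: "fact n \<le> Pr n k"
proof (induction n)
  case 0 then show ?case by (simp add: Pr_def)
next
  case (Suc n)
  have "fact (Suc n) = Suc n * fact n" by simp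
  also have "\<dots> \<le> (k + 2 + n) * Pr n k" using Suc by (intro mult_mono) auto
  also have "\<dots> = Pr (Suc n) k" by (simp add: Pr_def)
  finally show ?case .
qed

lemma phi_pow: "(phi ^^ n) x (j, k) = x (j, k + n) / of_nat (Pr n k)"
proof (induction n arbitrary: x k)
  case 0 then show ?case by (simp add: Pr_def)
next
  case (Suc n)
  have "(phi ^^ Suc n) x (j, k) = (phi ^^ n) (phi x) (j, k)" by (simp add: funpow_Suc_right del: funpow.simps)
  also have "\<dots> = phi x (j, k + n) / of_nat (Pr n k)" by (rule Suc)
  also have "\<dots> = x (j, k + Suc n) / (of_nat (k + n + 2) * of_nat (Pr n k))"
    by (simp add: phi_def)
  also have "\<dots> = x (j, k + Suc n) / of_nat (Pr (Suc n) k)"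
    unfolding Pr_Suc of_nat_mult by simp
  finally show ?case .
qed

lemma phi_pow_small: "x \<in> Xball \<Longrightarrow> norm ((phi ^^ n) x i) \<le> 1 / fact n"
proof -
  assume x: "x \<in> Xball"
  obtain j k where i: "i = (j, k)" by force
  have "norm (x (j, k + n)) \<le> 1" using x by (simp add: Xball_def)
  moreover have "(fact n :: real) \<le> real (Pr n k)" using Pr_fact[of n k] by (metis of_nat_fact of_nat_le_iff)
  moreover have "(0::real) < fact n" by simp
  ultimately have "norm (x (j, k + n)) / real (Pr n k) \<le> 1 / fact n"
    by (intro frac_le) auto
  then show ?thesis unfolding i phi_pow by (simp add: norm_divide)
qed



definition K0 :: "fn \<Rightarrow> fn" where
  "K0 f = (\<lambda>x. if x \<in> Xball then f (\<lambda>_. 0) else 0)"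

lemma const_Aalg: "(\<lambda>x. if x \<in> Xball then c else 0) \<in> Aalg"
  unfolding Aalg_def using polys.poly_const[of c] by (auto intro!: bexI[of _ "\<lambda>x. c"])

lemma zero_Aalg: "(\<lambda>x. 0) \<in> Aalg"
  using const_Aalg[of 0] by simp

lemma K0_compact: "compact_op K0"
  unfolding compact_op_def
proof (intro conjI allI impI)
  show "linear_on_A K0"
    unfolding linear_on_A_def K0_def using const_Aalg by (auto simp: fun_eq_iff)
next
  fix f :: "nat \<Rightarrow> fn" assume f: "\<forall>n. f n \<in> Aalg \<and> supnorm (f n) \<le> 1"
  define a where "a = (\<lambda>n. f n (\<lambda>_. 0))"
  have "a n \<in> cball 0 1" for n
  proof -
    have "norm (a n) \<le> supnorm (f n)" unfolding a_def using f Aalg_bnd supnorm_ge zero_Xball by blast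
    then show ?thesis using f[rule_format, of n] by simp
  qed
  moreover have "seq_compact (cball (0::complex) 1)"
    by (rule compact_imp_seq_compact) simp
  ultimately obtain l r where r: "strict_mono r" "(a \<circ> r) \<longlonglongrightarrow> l"
    using seq_compactE[of "cball 0 1" a] by blast
  show "\<exists>r g. strict_mono r \<and> g \<in> Aalg \<and> (\<lambda>n. supnorm (\<lambda>x. K0 (f (r n)) x - g x)) \<longlonglongrightarrow> 0"
  proof (intro exI conjI)
    show "strict_mono r" by fact
    show "(\<lambda>x. if x \<in> Xball then l else 0) \<in> Aalg" by (rule const_Aalg)
    have "supnorm (\<lambda>x. K0 (f (r n)) x - (if x \<in> Xball then l else 0)) = norm (a (r n) - l)" for n
      by (rule supnorm_const) (simp add: K0_def a_def)
    moreover have "(\<lambda>n. norm (a (r n) - l)) \<longlonglongrightarrow> 0"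
      using r(2) by (simp add: o_def tendsto_norm_zero LIM_zero)
    ultimately show "(\<lambda>n. supnorm (\<lambda>x. K0 (f (r n)) x - (if x \<in> Xball then l else 0))) \<longlonglongrightarrow> 0"
      by simp
  qed
qed

lemma supnorm_tri: assumes "bnd a" "bnd g" shows "supnorm a \<le> supnorm (\<lambda>x. a x - g x) + supnorm g"
proof (rule supnorm_le)
  fix x assume x: "x \<in> Xball"
  have "norm (a x) \<le> norm (a x - g x) + norm (g x)" using norm_triangle_ineq4[of "a x - g x" "- g x"] by simp
  also have "\<dots> \<le> supnorm (\<lambda>x. a x - g x) + supnorm g"
  proof (rule add_mono)
    show "norm (a x - g x) \<le> supnorm (\<lambda>x. a x - g x)" using x assms bnd_diff supnorm_ge by blast
    show "norm (g x) \<le> supnorm g" using x assms supnorm_ge by blast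
  qed
  finally show "norm (a x) \<le> supnorm (\<lambda>x. a x - g x) + supnorm g" .
qed

lemma compact_bounded:
  assumes K: "compact_op K"
  shows "\<exists>C. \<forall>f. f \<in> Aalg \<and> supnorm f \<le> 1 \<longrightarrow> supnorm (K f) \<le> C"
proof (rule ccontr)
  assume "\<not> ?thesis"
  then have "\<forall>n::nat. \<exists>f. f \<in> Aalg \<and> supnorm f \<le> 1 \<and> supnorm (K f) > real n"
    by (meson not_le)
  then obtain F where F: "\<And>n. F n \<in> Aalg \<and> supnorm (F n) \<le> 1 \<and> supnorm (K (F n)) > real n"
    by (rule choice[THEN exE]) blast
  have linK: "linear_on_A K" using K by (simp add: compact_op_def)
  obtain r g where rg: "strict_mono r" "g \<in> Aalg" "(\<lambda>n. supnorm (\<lambda>x. K (F (r n)) x - g x)) \<longlonglongrightarrow> 0"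
    using K F unfolding compact_op_def by blast
  have "eventually (\<lambda>n. supnorm (\<lambda>x. K (F (r n)) x - g x) < 1) sequentially"
    using rg(3) by (rule order_tendstoD) simp
  then obtain N where N: "\<And>n. n \<ge> N \<Longrightarrow> supnorm (\<lambda>x. K (F (r n)) x - g x) < 1"
    unfolding eventually_sequentially by blast
  obtain m :: nat where m: "supnorm g + 1 < real m" using reals_Archimedean2 by blast
  define n where "n = max N m"
  have KF: "K (F (r n)) \<in> Aalg" using linK F unfolding linear_on_A_def by blast
  have "supnorm (K (F (r n))) \<le> supnorm (\<lambda>x. K (F (r n)) x - g x) + supnorm g"
    by (rule supnorm_tri) (use KF rg(2) Aalg_bnd in auto)
  also have "\<dots> < 1 + supnorm g" using N[of n] by (simp add: n_def)
  also have "\<dots> < real m" using m by simp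
  also have "\<dots> \<le> real (r n)" using seq_suble[OF rg(1), of n] by (simp add: n_def)
  finally show False using F[of "r n"] by simp
qed

definition Bset :: "fn set" where "Bset = {f \<in> Aalg. supnorm f \<le> 1}"

lemma Bset_ne: "(\<lambda>x. 0) \<in> Bset"
  unfolding Bset_def using zero_Aalg supnorm_const[of "\<lambda>x. 0" 0] by simp

lemma opnorm_bdd:
  assumes K: "compact_op K"
  shows "bdd_above ((\<lambda>f. supnorm (\<lambda>x. (Tphi ^^ n) f x - K f x)) ` Bset)"
proof -
  obtain C where C: "\<And>f. f \<in> Aalg \<and> supnorm f \<le> 1 \<Longrightarrow> supnorm (K f) \<le> C"
    using compact_bounded[OF K] by blast
  have linK: "linear_on_A K" using K by (simp add: compact_op_def)
  show ?thesis
  proof (rule bdd_aboveI2)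
    fix f assume f: "f \<in> Bset"
    then have fA: "f \<in> Aalg" "supnorm f \<le> 1" by (auto simp: Bset_def)
    have "K f \<in> Aalg" using linK fA unfolding linear_on_A_def by blast
    then have "supnorm (\<lambda>x. (Tphi ^^ n) f x - K f x) \<le> supnorm ((Tphi ^^ n) f) + supnorm (K f)"
      by (intro supnorm_diff Aalg_bnd Tphi_pow_Aalg fA)
    also have "\<dots> \<le> 1 + C" using Tphi_pow_norm[OF fA(1), of n] fA C[of f] by simp
    finally show "supnorm (\<lambda>x. (Tphi ^^ n) f x - K f x) \<le> 1 + C" .
  qed
qed

lemma opnorm_nonneg:
  assumes K: "compact_op K"
  shows "0 \<le> opnorm (\<lambda>f x. (Tphi ^^ n) f x - K f x)"
proof -
  have linK: "linear_on_A K" using K by (simp add: compact_op_def)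
  let ?z = "\<lambda>x::pt. 0::complex"
  have "K ?z \<in> Aalg" using linK zero_Aalg unfolding linear_on_A_def by blast
  then have "0 \<le> supnorm (\<lambda>x. (Tphi ^^ n) ?z x - K ?z x)"
    by (intro supnorm_nonneg bnd_diff Aalg_bnd Tphi_pow_Aalg zero_Aalg)
  also have "\<dots> \<le> opnorm (\<lambda>f x. (Tphi ^^ n) f x - K f x)"
    unfolding opnorm_def Bset_def[symmetric]
    by (rule cSUP_upper[OF Bset_ne opnorm_bdd[OF K]])
  finally show ?thesis .
qed

lemma ess_nonneg: "0 \<le> ess_norm (Tphi ^^ n)"
  unfolding ess_norm_def
  by (rule cInf_greatest) (use K0_compact opnorm_nonneg in auto)

lemma ess_upper:
  assumes n: "n \<ge> 2"
  shows "ess_norm (Tphi ^^ n) \<le> 2 / fact n"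
proof -
  have "(2::nat) \<le> fact n" using fact_ge_self[of n] n by linarith
  then have "real 2 \<le> real (fact n)" by (simp only: of_nat_le_iff)
  then have fn2: "(2::real) \<le> fact n" by simp
  define r :: real where "r = 1 / fact n"
  have r: "0 < r" "r < 1" using fn2 by (auto simp: r_def)
  have "ess_norm (Tphi ^^ n) \<le> opnorm (\<lambda>f x. (Tphi ^^ n) f x - K0 f x)"
    unfolding ess_norm_def
    by (rule cInf_lower) (use K0_compact opnorm_nonneg in \<open>auto simp: bdd_below_def\<close>)
  also have "\<dots> \<le> 2 * r"
    unfolding opnorm_def
  proof (rule cSUP_least)
    show "{f \<in> Aalg. supnorm f \<le> 1} \<noteq> {}" using Bset_ne by (auto simp: Bset_def)
  next
    fix f assume f: "f \<in> {f \<in> Aalg. supnorm f \<le> 1}"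
    show "supnorm (\<lambda>x. (Tphi ^^ n) f x - K0 f x) \<le> 2 * r"
    proof (rule supnorm_le)
      fix x assume x: "x \<in> Xball"
      have "norm ((Tphi ^^ n) f x - K0 f x) = norm (f ((phi ^^ n) x) - f (\<lambda>_. 0))"
        using f x by (simp add: Tphi_pow K0_def)
      also have "\<dots> \<le> 2 * r * supnorm f"
        by (rule Aalg_schwarz) (use f x phi_pow_small r in \<open>auto simp: r_def\<close>)
      also have "\<dots> \<le> 2 * r" using f r by (simp add: mult_left_le)
      finally show "norm ((Tphi ^^ n) f x - K0 f x) \<le> 2 * r" .
    qed
  qed
  finally show ?thesis by (simp add: r_def)
qed



lemma riesz: "riesz_op Tphi"
  unfolding riesz_op_def
proof (rule LIMSEQ_I)
  fix \<epsilon> :: real assume eps: "0 < \<epsilon>"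
  define y where "y = 2 / \<epsilon>"
  have "(\<lambda>n. inverse (fact n) * y ^ n) \<longlonglongrightarrow> 0"
    by (rule summable_LIMSEQ_zero[OF summable_exp])
  then have "eventually (\<lambda>n. inverse (fact n) * y ^ n < 1) sequentially"
    by (rule order_tendstoD) simp
  then obtain N0 where N0: "\<And>n. n \<ge> N0 \<Longrightarrow> inverse (fact n) * y ^ n < 1"
    unfolding eventually_sequentially by blast
  show "\<exists>no. \<forall>n\<ge>no. norm (root n (ess_norm (Tphi ^^ n)) - 0) < \<epsilon>"
  proof (intro exI allI impI)
    fix n assume n: "max N0 2 \<le> n"
    have n2: "n \<ge> 2" and nN: "n \<ge> N0" using n by auto
    have fpos: "(0::real) < fact n" by simp
    have "y ^ n < fact n" using N0[OF nN] fpos by (simp add: field_simps)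
    then have "2 ^ n < \<epsilon> ^ n * fact n" using eps by (simp add: y_def power_divide field_simps)
    moreover have "(2::real) \<le> 2 ^ n" using n2
      by (metis one_le_numeral order.trans power_increasing power_one_right)
    ultimately have "2 < \<epsilon> ^ n * fact n" by linarith
    then have lt: "2 / fact n < \<epsilon> ^ n" using fpos by (simp add: divide_less_eq)
    have e0: "0 \<le> ess_norm (Tphi ^^ n)" by (rule ess_nonneg)
    have "ess_norm (Tphi ^^ n) < \<epsilon> ^ n" using ess_upper[OF n2] lt by linarith
    then have "root n (ess_norm (Tphi ^^ n)) < root n (\<epsilon> ^ n)" using n2 by simp
    also have "\<dots> = \<epsilon>" using n2 eps by (simp add: real_root_power_cancel)
    finally show "norm (root n (ess_norm (Tphi ^^ n)) - 0) < \<epsilon>"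
      using real_root_ge_zero[OF e0, of n] by simp
  qed
qed

lemma not_compact_pow: "\<not> compact_op (Tphi ^^ N)"
proof
  assume C: "compact_op (Tphi ^^ N)"
  define F where "F = (\<lambda>m::nat. \<lambda>x::pt. if x \<in> Xball then x (m, 0) else 0)"
  have FA: "F m \<in> Aalg" for m
    unfolding Aalg_def F_def using polys.poly_proj[of "(m,0)"] by (auto intro!: bexI[of _ "\<lambda>x. x (m,0)"])
  have Fn: "supnorm (F m) \<le> 1" for m
    by (rule supnorm_le) (simp add: F_def Xball_def)
  obtain r g where rg: "strict_mono r" "g \<in> Aalg"
     "(\<lambda>n. supnorm (\<lambda>x. (Tphi ^^ N) (F (r n)) x - g x)) \<longlonglongrightarrow> 0"
    using C FA Fn unfolding compact_op_def by blast
  define d where "d = (\<lambda>n. supnorm (\<lambda>x. (Tphi ^^ N) (F (r n)) x - g x))"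
  define P where "P = real (Pr N 0)"
  have P: "P > 0" using Pr_pos by (simp add: P_def)
  have "eventually (\<lambda>n. d n < 1 / (2 * P)) sequentially"
    using rg(3) unfolding d_def[symmetric] by (rule order_tendstoD) (use P in simp)
  then obtain M where M: "\<And>n. n \<ge> M \<Longrightarrow> d n < 1 / (2 * P)"
    unfolding eventually_sequentially by blast
  define e where "e = (\<lambda>m. \<lambda>i::nat\<times>nat. if i = (m, N) then (1::complex) else 0)"
  have eX: "e m \<in> Xball" for m by (simp add: e_def Xball_def)
  have val: "(Tphi ^^ N) (F m') (e m) = (if m' = m then 1 / of_nat (Pr N 0) else 0)" for m m'
  proof -
    have "(Tphi ^^ N) (F m') (e m) = F m' ((phi ^^ N) (e m))" using FA eX by (simp add: Tphi_pow)
    also have "\<dots> = (phi ^^ N) (e m) (m', 0)" using eX phi_pow_Xball by (simp add: F_def)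
    also have "\<dots> = (if m' = m then 1 / of_nat (Pr N 0) else 0)" by (simp add: phi_pow e_def)
    finally show ?thesis .
  qed
  have bd: "bnd (\<lambda>x. (Tphi ^^ N) (F (r n)) x - g x)" for n
    by (intro bnd_diff Aalg_bnd Tphi_pow_Aalg FA rg(2))
  define a where "a = r M"
  have ne: "r (Suc M) \<noteq> a" using rg(1) unfolding a_def strict_mono_def by (metis lessI less_irrefl)
  have 1: "norm (1 / of_nat (Pr N 0) - g (e a)) \<le> d M"
    using supnorm_ge[OF bd[of M] eX[of a]] val[of a a] by (simp add: d_def a_def)
  have 2: "norm (0 - g (e a)) \<le> d (Suc M)"
    using supnorm_ge[OF bd[of "Suc M"] eX[of a]] val[of "r (Suc M)" a] ne by (simp add: d_def)
  have "norm (1 / of_nat (Pr N 0) :: complex) \<le> norm (1 / of_nat (Pr N 0) - g (e a)) + norm (0 - g (e a))"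
    using norm_triangle_ineq4[of "1 / of_nat (Pr N 0) - g (e a)" "0 - g (e a)"] by simp
  also have "\<dots> < 1 / (2 * P) + 1 / (2 * P)" using 1 2 M[of M] M[of "Suc M"] by simp
  also have "\<dots> = 1 / P" using P by (simp add: field_simps)
  finally have "1 / P < 1 / P"
    unfolding P_def by (simp add: norm_divide)
  then show False by simp
qed

theorem theorem4p3:
  shows "(\<forall>x\<in>Xball. phi x \<in> Xball) \<and> unital_endomorphism Tphi \<and> bounded_on_A Tphi
         \<and> riesz_op Tphi \<and> \<not> power_compact Tphi"
  using phi_Xball unital bounded riesz not_compact_pow
  unfolding power_compact_def by blast

end
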